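(* Let $(f,L)$ satisfy the usual conditions and let $\Omega^\star=\{\liminf_{t\to\infty}Z(t)>0\}$. If $S>0$, then $\mathbb P$-almost surely on $\Omega^\star$, \[\liminf_{t\to\infty}\frac{\log|\hat N(t)|}{\int_0^t\big(r-\frac12f'(s)^2-\frac{\pi^2}{8L(s)^2}+\frac{L'(s)}{2L(s)}\big)ds}\ge1.\]
   Context: Branching Brownian motion (BBM) with branching rate $r>0$: under $\mathbb P$ we start with a single particle at $0$; each particle moves as a standard one-dimensional Brownian motion independently of all others, lives for an independent exponential time with parameter $r$, and then is replaced by two children at its current position, which evolve independently in the same way. $N(t)$ is the set of particles alive at time $t$; for $u\in N(t)$ and $s\le t$, $X_u(s)$ denotes the position at time $s$ of $u$ or of its ancestor alive at time $s$. Given continuous $f:[0,\infty)\to\mathbb R$ and $L:[0,\infty)\to(0,\infty)$, let $\hat N(t)=\{u\in N(t): |X_u(s)-f(s)|<L(s)\ \forall s\le t\}$. When $f,L$ are twice continuously differentiable, set $E(t)=|f'(t)|L(t)+\int_0^t|f''(s)|L(s)ds+\frac12|L'(t)|L(t)+\frac12\int_0^t|L''(s)|L(s)ds$ and $S=\liminf_{t\to\infty}\frac1t\int_0^t\big(r-\frac12 f'(s)^2-\frac{\pi^2}{8L(s)^2}+\frac{L'(s)}{2L(s)}\big)ds$. The pair $(f,L)$ satisfies the usual conditions if (I) $f(0)=0$; (II) $f$ and $L$ are twice continuously differentiable; (III) $E(t)/t\to0$; (IV) $S\in(-\infty,\infty)$. For $u\in N(t)$ define $G_u(t)=\exp\Big(\int_0^t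 f'(s)dX_u(s)-\frac12\int_0^t f'(s)^2ds+\int_0^t\frac{\pi^2}{8L(s)^2}ds+\frac{L'(t)}{2L(t)}(X_u(t)-f(t))^2-\int_0^t\big(\frac{L''(s)}{2L(s)}(X_u(s)-f(s))^2+\frac{L'(s)}{2L(s)}\big)ds\Big)$, $\zeta_u(t)=G_u(t)\cos\big(\frac{\pi}{2L(t)}(X_u(t)-f(t))\big)\mathbf 1_{\{|X_u(s)-f(s)|<L(s)\ \forall s\le t\}}$, and $Z(t)=\sum_{u\in N(t)}e^{-rt}\zeta_u(t)$. *)

theory Defs
  imports "HOL-Probability.Probability"
begin

definition std_BM :: "'w measure \<Rightarrow> (real \<Rightarrow> 'w \<Rightarrow> real) \<Rightarrow> bool" where
  "std_BM M W \<longleftrightarrow>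
     (\<forall>s\<ge>0. W s \<in> borel_measurable M) \<and>
     (\<forall>\<omega>\<in>space M. W 0 \<omega> = 0 \<and> continuous_on {0..} (\<lambda>s. W s \<omega>)) \<and>
     (\<forall>s t. 0 \<le> s \<and> s < t \<longrightarrow>
        distributed M lborel (\<lambda>\<omega>. W t \<omega> - W s \<omega>)
          (\<lambda>x. ennreal (normal_density 0 (sqrt (t - s)) x))) \<and>
     (\<forall>ts :: real list. sorted_wrt (<) ts \<and> (\<forall>t\<in>set ts. 0 \<le> t) \<longrightarrow>
        prob_space.indep_vars M (\<lambda>_. borel)
          (\<lambda>i \<omega>. W (ts ! Suc i) \<omega> - W (ts ! i) \<omega>) {..<length ts - 1})"

definition gen_sigma :: "'w measure \<Rightarrow> (real \<Rightarrow> 'w \<Rightarrow> real) \<Rightarrow> 'w set set" where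
  "gen_sigma M V = sigma_sets (space M)
     (\<Union>s\<in>{0..}. {V s -` A \<inter> space M | A. A \<in> sets borel})"

text \<open>Ulam--Harris construction of BBM. Particles are labelled by bool lists;
  label u has lifetime E u and driving Brownian motion B u.
  Birth time of u = sum of lifetimes of its strict ancestors.\<close>
definition born :: "(bool list \<Rightarrow> 'w \<Rightarrow> real) \<Rightarrow> bool list \<Rightarrow> 'w \<Rightarrow> real" where
  "born E u \<omega> = (\<Sum>j<length u. E (take j u) \<omega>)"

definition death :: "(bool list \<Rightarrow> 'w \<Rightarrow> real) \<Rightarrow> bool list \<Rightarrow> 'w \<Rightarrow> real" where
  "death E u \<omega> = born E u \<omega> + E u \<omega>"

definition alive :: "(bool list \<Rightarrow> 'w \<Rightarrow> real) \<Rightarrow> real \<Rightarrow> 'w \<Rightarrow> bool list set" where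
  "alive E t \<omega> = {u. born E u \<omega> \<le> t \<and> t < death E u \<omega>}"

text \<open>X_u(s): position at time s of u or of its ancestor alive at time s
  (meaningful for 0 \<le> s < death of u).\<close>
definition pos :: "(bool list \<Rightarrow> 'w \<Rightarrow> real) \<Rightarrow> (bool list \<Rightarrow> real \<Rightarrow> 'w \<Rightarrow> real)
    \<Rightarrow> bool list \<Rightarrow> real \<Rightarrow> 'w \<Rightarrow> real" where
  "pos E B u s \<omega> = (\<Sum>j\<in>{0..length u}.
      B (take j u) (min (E (take j u) \<omega>) (max 0 (s - born E (take j u) \<omega>))) \<omega>)"

definition tube_alive :: "(bool list \<Rightarrow> 'w \<Rightarrow> real) \<Rightarrow> (bool list \<Rightarrow> real \<Rightarrow> 'w \<Rightarrow> real)
    \<Rightarrow> (real \<Rightarrow> real) \<Rightarrow> (real \<Rightarrow> real) \<Rightarrow> real \<Rightarrow> 'w \<Rightarrow> bool list set" where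
  "tube_alive E B f L t \<omega> = {u \<in> alive E t \<omega>.
      \<forall>s\<in>{0..t}. \<bar>pos E B u s \<omega> - f s\<bar> < L s}"

text \<open>log G_u(t). The stochastic integral of the deterministic C^1 integrand f'
  against X_u is written pathwise via integration by parts (X_u(0)=0).\<close>
definition logG :: "(bool list \<Rightarrow> 'w \<Rightarrow> real) \<Rightarrow> (bool list \<Rightarrow> real \<Rightarrow> 'w \<Rightarrow> real)
    \<Rightarrow> (real \<Rightarrow> real) \<Rightarrow> (real \<Rightarrow> real) \<Rightarrow> (real \<Rightarrow> real)
    \<Rightarrow> (real \<Rightarrow> real) \<Rightarrow> (real \<Rightarrow> real) \<Rightarrow> (real \<Rightarrow> real)
    \<Rightarrow> bool list \<Rightarrow> real \<Rightarrow> 'w \<Rightarrow> real" where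
  "logG E B f f' f'' L L' L'' u t \<omega> =
     (let X = (\<lambda>s. pos E B u s \<omega>) in
       (f' t * X t - integral {0..t} (\<lambda>s. f'' s * X s))
       - 1/2 * integral {0..t} (\<lambda>s. (f' s)\<^sup>2)
       + integral {0..t} (\<lambda>s. pi\<^sup>2 / (8 * (L s)\<^sup>2))
       + L' t / (2 * L t) * (X t - f t)\<^sup>2
       - integral {0..t} (\<lambda>s. L'' s / (2 * L s) * (X s - f s)\<^sup>2 + L' s / (2 * L s)))"

definition zeta :: "(bool list \<Rightarrow> 'w \<Rightarrow> real) \<Rightarrow> (bool list \<Rightarrow> real \<Rightarrow> 'w \<Rightarrow> real)
    \<Rightarrow> (real \<Rightarrow> real) \<Rightarrow> (real \<Rightarrow> real) \<Rightarrow> (real \<Rightarrow> real)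
    \<Rightarrow> (real \<Rightarrow> real) \<Rightarrow> (real \<Rightarrow> real) \<Rightarrow> (real \<Rightarrow> real)
    \<Rightarrow> bool list \<Rightarrow> real \<Rightarrow> 'w \<Rightarrow> real" where
  "zeta E B f f' f'' L L' L'' u t \<omega> =
     exp (logG E B f f' f'' L L' L'' u t \<omega>)
     * cos (pi / (2 * L t) * (pos E B u t \<omega> - f t))
     * (if \<forall>s\<in>{0..t}. \<bar>pos E B u s \<omega> - f s\<bar> < L s then 1 else 0)"

definition Zmart :: "real \<Rightarrow> (bool list \<Rightarrow> 'w \<Rightarrow> real) \<Rightarrow> (bool list \<Rightarrow> real \<Rightarrow> 'w \<Rightarrow> real)
    \<Rightarrow> (real \<Rightarrow> real) \<Rightarrow> (real \<Rightarrow> real) \<Rightarrow> (real \<Rightarrow> real)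
    \<Rightarrow> (real \<Rightarrow> real) \<Rightarrow> (real \<Rightarrow> real) \<Rightarrow> (real \<Rightarrow> real)
    \<Rightarrow> real \<Rightarrow> 'w \<Rightarrow> real" where
  "Zmart r E B f f' f'' L L' L'' t \<omega> =
     (\<Sum>u\<in>alive E t \<omega>. exp (- r * t) * zeta E B f f' f'' L L' L'' u t \<omega>)"

definition growth :: "real \<Rightarrow> (real \<Rightarrow> real) \<Rightarrow> (real \<Rightarrow> real) \<Rightarrow> (real \<Rightarrow> real)
    \<Rightarrow> real \<Rightarrow> real" where
  "growth r f' L L' t = integral {0..t}
     (\<lambda>s. r - 1/2 * (f' s)\<^sup>2 - pi\<^sup>2 / (8 * (L s)\<^sup>2) + L' s / (2 * L s))"

definition Eerr :: "(real \<Rightarrow> real) \<Rightarrow> (real \<Rightarrow> real) \<Rightarrow> (real \<Rightarrow> real)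
    \<Rightarrow> (real \<Rightarrow> real) \<Rightarrow> (real \<Rightarrow> real) \<Rightarrow> real \<Rightarrow> real" where
  "Eerr f' f'' L L' L'' t = \<bar>f' t\<bar> * L t + integral {0..t} (\<lambda>s. \<bar>f'' s\<bar> * L s)
     + 1/2 * \<bar>L' t\<bar> * L t + 1/2 * integral {0..t} (\<lambda>s. \<bar>L'' s\<bar> * L s)"

definition Sconst :: "real \<Rightarrow> (real \<Rightarrow> real) \<Rightarrow> (real \<Rightarrow> real) \<Rightarrow> (real \<Rightarrow> real) \<Rightarrow> ereal" where
  "Sconst r f' L L' = Liminf at_top (\<lambda>t. ereal (growth r f' L L' t / t))"

end

theory Submission imports Defs begin

lemma deriv_cont:
  assumes "\<And>s. s \<ge> 0 \<Longrightarrow> (g has_real_derivative g' s) (at s within {0..})"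
  shows "continuous_on {0..t} g"
proof -
  have "continuous_on {0..} g"
    unfolding continuous_on_eq_continuous_within
    using assms DERIV_continuous by (metis atLeast_iff)
  then show ?thesis by (rule continuous_on_subset) auto
qed

lemma logG_bound:
  fixes X f f' f'' L L' L'' :: "real \<Rightarrow> real" and t r :: real
  assumes t: "t \<ge> 0"
    and f0: "f 0 = 0"
    and f_deriv: "\<And>s. s \<ge> 0 \<Longrightarrow> (f has_real_derivative f' s) (at s within {0..})"
    and f'_deriv: "\<And>s. s \<ge> 0 \<Longrightarrow> (f' has_real_derivative f'' s) (at s within {0..})"
    and f''_cont: "continuous_on {0..} f''"
    and L_pos: "\<And>s. s \<ge> 0 \<Longrightarrow> L s > 0"
    and L_deriv: "\<And>s. s \<ge> 0 \<Longrightarrow> (L has_real_derivative L' s) (at s within {0..})"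
    and L'_deriv: "\<And>s. s \<ge> 0 \<Longrightarrow> (L' has_real_derivative L'' s) (at s within {0..})"
    and L''_cont: "continuous_on {0..} L''"
    and Xc: "continuous_on {0..t} X"
    and tube: "\<forall>s\<in>{0..t}. \<bar>X s - f s\<bar> < L s"
  shows "(f' t * X t - integral {0..t} (\<lambda>s. f'' s * X s))
       - 1/2 * integral {0..t} (\<lambda>s. (f' s)\<^sup>2)
       + integral {0..t} (\<lambda>s. pi\<^sup>2 / (8 * (L s)\<^sup>2))
       + L' t / (2 * L t) * (X t - f t)\<^sup>2
       - integral {0..t} (\<lambda>s. L'' s / (2 * L s) * (X s - f s)\<^sup>2 + L' s / (2 * L s))
     \<le> r * t - growth r f' L L' t + Eerr f' f'' L L' L'' t"
proof -
  have cf: "continuous_on {0..t} f" by (rule deriv_cont[OF f_deriv])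
  have cf': "continuous_on {0..t} f'" by (rule deriv_cont[OF f'_deriv])
  have cL: "continuous_on {0..t} L" by (rule deriv_cont[OF L_deriv])
  have cL': "continuous_on {0..t} L'" by (rule deriv_cont[OF L'_deriv])
  have cf'': "continuous_on {0..t} f''" using f''_cont by (rule continuous_on_subset) auto
  have cL'': "continuous_on {0..t} L''" using L''_cont by (rule continuous_on_subset) auto
  have Lnz: "\<forall>s\<in>{0..t}. L s \<noteq> 0" using L_pos by force
  have tube_le: "\<forall>s\<in>{0..t}. \<bar>X s - f s\<bar> \<le> L s" using tube by (simp add: less_imp_le)
  define Y where "Y s = X s - f s" for s
  have cY: "continuous_on {0..t} Y" unfolding Y_def using Xc cf by (intro continuous_intros)
  note ic = integrable_continuous_interval
  have i1: "(\<lambda>s. f'' s * f s) integrable_on {0..t}" by (rule ic) (intro continuous_intros cf cf'')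
  have i2: "(\<lambda>s. f'' s * Y s) integrable_on {0..t}" by (rule ic) (intro continuous_intros cY cf'')
  have i3: "(\<lambda>s. (f' s)\<^sup>2) integrable_on {0..t}" by (rule ic) (intro continuous_intros cf')
  have i4: "(\<lambda>s. pi\<^sup>2 / (8 * (L s)\<^sup>2)) integrable_on {0..t}"
    by (rule ic) (intro continuous_intros cL, use Lnz in auto)
  have i5: "(\<lambda>s. L'' s / (2 * L s) * (Y s)\<^sup>2) integrable_on {0..t}"
    by (rule ic) (intro continuous_intros cL cL'' cY, use Lnz in auto)
  have i6: "(\<lambda>s. L' s / (2 * L s)) integrable_on {0..t}"
    by (rule ic) (intro continuous_intros cL cL', use Lnz in auto)
  have i7: "(\<lambda>s. \<bar>f'' s\<bar> * L s) integrable_on {0..t}" by (rule ic) (intro continuous_intros cL cf'')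
  have i8: "(\<lambda>s. \<bar>L'' s\<bar> * L s) integrable_on {0..t}" by (rule ic) (intro continuous_intros cL cL'')
  have i9: "(\<lambda>s. r) integrable_on {0..t}" by (rule ic) (rule continuous_on_const)
  have "((\<lambda>s. f'' s * f s + f' s * f' s) has_integral (f' t * f t - f' 0 * f 0)) {0..t}"
  proof (rule fundamental_theorem_of_calculus[OF t])
    fix x assume x: "x \<in> {0..t}"
    have "((\<lambda>s. f' s * f s) has_real_derivative (f'' x * f x + f' x * f' x)) (at x within {0..t})"
    proof -
      have d1: "(f' has_real_derivative f'' x) (at x within {0..t})"
        using has_field_derivative_subset[OF f'_deriv[of x]] x by auto
      have d2: "(f has_real_derivative f' x) (at x within {0..t})"
        using has_field_derivative_subset[OF f_deriv[of x]] x by auto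
      show ?thesis using DERIV_mult[OF d1 d2] by (simp add: algebra_simps)
    qed
    then show "((\<lambda>s. f' s * f s) has_vector_derivative (f'' x * f x + f' x * f' x)) (at x within {0..t})"
      by (simp add: has_real_derivative_iff_has_vector_derivative)
  qed
  then have ftc: "integral {0..t} (\<lambda>s. f'' s * f s) + integral {0..t} (\<lambda>s. (f' s)\<^sup>2) = f' t * f t"
    using i1 i3 f0 by (simp add: integral_add[symmetric] power2_eq_square integral_unique)
  have X_eq: "integral {0..t} (\<lambda>s. f'' s * X s) = integral {0..t} (\<lambda>s. f'' s * f s) + integral {0..t} (\<lambda>s. f'' s * Y s)"
    using i1 i2 by (simp add: integral_add[symmetric] Y_def algebra_simps)
  have b1: "- integral {0..t} (\<lambda>s. \<bar>f'' s\<bar> * L s) \<le> integral {0..t} (\<lambda>s. f'' s * Y s)"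
  proof -
    have "integral {0..t} (\<lambda>s. - (\<bar>f'' s\<bar> * L s)) \<le> integral {0..t} (\<lambda>s. f'' s * Y s)"
    proof (rule integral_le[OF integrable_neg[OF i7] i2])
      fix s assume s: "s \<in> {0..t}"
      have "\<bar>f'' s * Y s\<bar> \<le> \<bar>f'' s\<bar> * L s"
        using tube_le s by (auto simp: Y_def abs_mult intro!: mult_left_mono)
      then show "- (\<bar>f'' s\<bar> * L s) \<le> f'' s * Y s" by linarith
    qed
    then show ?thesis by simp
  qed
  have L_eq: "integral {0..t} (\<lambda>s. L'' s / (2 * L s) * (X s - f s)\<^sup>2 + L' s / (2 * L s))
      = integral {0..t} (\<lambda>s. L'' s / (2 * L s) * (Y s)\<^sup>2) + integral {0..t} (\<lambda>s. L' s / (2 * L s))"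
    using i5 i6 by (simp add: integral_add[symmetric] Y_def)
  have b2: "- (1/2 * integral {0..t} (\<lambda>s. \<bar>L'' s\<bar> * L s)) \<le> integral {0..t} (\<lambda>s. L'' s / (2 * L s) * (Y s)\<^sup>2)"
  proof -
    have i8': "(\<lambda>s. - (1/2 * (\<bar>L'' s\<bar> * L s))) integrable_on {0..t}"
      by (rule ic) (intro continuous_intros cL cL'')
    have "integral {0..t} (\<lambda>s. - (1/2 * (\<bar>L'' s\<bar> * L s))) \<le> integral {0..t} (\<lambda>s. L'' s / (2 * L s) * (Y s)\<^sup>2)"
    proof (rule integral_le[OF i8' i5])
      fix s assume s: "s \<in> {0..t}"
      have Ls: "L s > 0" using L_pos s by auto
      have "(Y s)\<^sup>2 \<le> (L s)\<^sup>2" using tube s Ls unfolding Y_def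
        by (metis abs_le_square_iff abs_of_pos less_imp_le)
      then have "\<bar>L'' s / (2 * L s) * (Y s)\<^sup>2\<bar> \<le> \<bar>L'' s\<bar> / (2 * L s) * (L s)\<^sup>2"
        using Ls by (auto simp: abs_mult intro!: divide_right_mono mult_left_mono)
      also have "\<dots> = 1/2 * (\<bar>L'' s\<bar> * L s)" using Ls by (simp add: power2_eq_square field_simps)
      finally show "- (1/2 * (\<bar>L'' s\<bar> * L s)) \<le> L'' s / (2 * L s) * (Y s)\<^sup>2" by linarith
    qed
    then show ?thesis
      by simp
  qed
  have b3: "L' t / (2 * L t) * (X t - f t)\<^sup>2 \<le> 1/2 * \<bar>L' t\<bar> * L t"
  proof -
    have Ls: "L t > 0" using L_pos t by auto
    have "(X t - f t)\<^sup>2 \<le> (L t)\<^sup>2" using tube t Ls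
      by (metis abs_le_square_iff abs_of_pos atLeastAtMost_iff less_imp_le order_refl)
    then have "L' t / (2 * L t) * (X t - f t)\<^sup>2 \<le> \<bar>L' t\<bar> / (2 * L t) * (L t)\<^sup>2"
      using Ls by (intro order_trans[OF abs_ge_self[of "L' t / (2 * L t) * (X t - f t)\<^sup>2"]])
        (auto simp: abs_mult intro!: divide_right_mono mult_left_mono)
    also have "\<dots> = 1/2 * \<bar>L' t\<bar> * L t" using Ls by (simp add: power2_eq_square field_simps)
    finally show ?thesis .
  qed
  have b4: "f' t * Y t \<le> \<bar>f' t\<bar> * L t"
  proof -
    have "\<bar>f' t * Y t\<bar> \<le> \<bar>f' t\<bar> * L t" using tube_le t by (auto simp: Y_def abs_mult intro!: mult_left_mono)
    then show ?thesis by linarith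
  qed
  have g_eq: "growth r f' L L' t = r * t - 1/2 * integral {0..t} (\<lambda>s. (f' s)\<^sup>2)
      - integral {0..t} (\<lambda>s. pi\<^sup>2 / (8 * (L s)\<^sup>2)) + integral {0..t} (\<lambda>s. L' s / (2 * L s))"
  proof -
    have ia: "(\<lambda>s. r - 1/2 * (f' s)\<^sup>2) integrable_on {0..t}"
      by (rule ic) (intro continuous_intros cf')
    have ib: "(\<lambda>s. r - 1/2 * (f' s)\<^sup>2 - pi\<^sup>2 / (8 * (L s)\<^sup>2)) integrable_on {0..t}"
      by (rule ic) (intro continuous_intros cf' cL, use Lnz in auto)
    have ih: "(\<lambda>s. 1/2 * (f' s)\<^sup>2) integrable_on {0..t}"
      by (rule ic) (intro continuous_intros cf')
    have e1: "growth r f' L L' t = integral {0..t} (\<lambda>s. r - 1/2 * (f' s)\<^sup>2 - pi\<^sup>2 / (8 * (L s)\<^sup>2))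
       + integral {0..t} (\<lambda>s. L' s / (2 * L s))"
      unfolding growth_def by (rule integral_add[OF ib i6])
    have e2: "integral {0..t} (\<lambda>s. r - 1/2 * (f' s)\<^sup>2 - pi\<^sup>2 / (8 * (L s)\<^sup>2))
       = integral {0..t} (\<lambda>s. r - 1/2 * (f' s)\<^sup>2) - integral {0..t} (\<lambda>s. pi\<^sup>2 / (8 * (L s)\<^sup>2))"
      by (rule integral_diff[OF ia i4])
    have e3: "integral {0..t} (\<lambda>s. r - 1/2 * (f' s)\<^sup>2)
       = integral {0..t} (\<lambda>s. r) - integral {0..t} (\<lambda>s. 1/2 * (f' s)\<^sup>2)"
      by (rule integral_diff[OF i9 ih])
    have e4: "integral {0..t} (\<lambda>s. 1/2 * (f' s)\<^sup>2) = 1/2 * integral {0..t} (\<lambda>s. (f' s)\<^sup>2)"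
      by (rule integral_mult_right)
    have e5: "integral {0..t} (\<lambda>s. r) = r * t" using t by simp
    show ?thesis using e1 e2 e3 e4 e5 by linarith
  qed
  have XY: "f' t * X t = f' t * f t + f' t * Y t" by (simp add: Y_def algebra_simps)
  show ?thesis
    unfolding g_eq Eerr_def X_eq L_eq XY
    using ftc b1 b2 b3 b4 by linarith
qed


lemma pos_cont:
  assumes B: "\<And>v. continuous_on {0..} (\<lambda>s. B v s w)"
    and Epos: "\<And>v. E v w \<ge> 0"
  shows "continuous_on {0..t} (\<lambda>s. pos E B u s w)"
  unfolding pos_def
proof (intro continuous_on_sum)
  fix j
  let ?v = "take j u"
  have "continuous_on {0..t} (\<lambda>s. min (E ?v w) (max 0 (s - born E ?v w)))"
    by (intro continuous_intros)
  moreover have "(\<lambda>s. min (E ?v w) (max 0 (s - born E ?v w))) ` {0..t} \<subseteq> {0..}"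
    using Epos[of ?v] by auto
  ultimately show "continuous_on {0..t} (\<lambda>s. B ?v (min (E ?v w) (max 0 (s - born E ?v w))) w)"
    by (rule continuous_on_compose2[OF B])
qed

lemma E_nonneg_AE:
  assumes "distributed M lborel X (\<lambda>x. ennreal (exponential_density r x))"
  shows "AE w in M. X w \<ge> 0"
proof -
  have d: "distr M lborel X = density lborel (\<lambda>x. ennreal (exponential_density r x))"
    and m: "(\<lambda>x. ennreal (exponential_density r x)) \<in> borel_measurable lborel"
    and X: "X \<in> measurable M lborel"
    using assms unfolding distributed_def by auto
  have "AE x in density lborel (\<lambda>x. ennreal (exponential_density r x)). x \<ge> 0"
    by (subst AE_density[OF m]) (auto simp: exponential_density_def intro!: AE_I2 split: if_splits)
  then have "AE x in distr M lborel X. x \<ge> 0" unfolding d .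
  then show ?thesis by (rule AE_distrD[OF X])
qed


lemma Z_bound:
  fixes f f' f'' L L' L'' :: "real \<Rightarrow> real" and t r :: real
  assumes t: "t \<ge> 0"
    and f0: "f 0 = 0"
    and f_deriv: "\<And>s. s \<ge> 0 \<Longrightarrow> (f has_real_derivative f' s) (at s within {0..})"
    and f'_deriv: "\<And>s. s \<ge> 0 \<Longrightarrow> (f' has_real_derivative f'' s) (at s within {0..})"
    and f''_cont: "continuous_on {0..} f''"
    and L_pos: "\<And>s. s \<ge> 0 \<Longrightarrow> L s > 0"
    and L_deriv: "\<And>s. s \<ge> 0 \<Longrightarrow> (L has_real_derivative L' s) (at s within {0..})"
    and L'_deriv: "\<And>s. s \<ge> 0 \<Longrightarrow> (L' has_real_derivative L'' s) (at s within {0..})"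
    and L''_cont: "continuous_on {0..} L''"
    and Xc: "\<And>u. continuous_on {0..t} (\<lambda>s. pos E B u s w)"
  shows "Zmart r E B f f' f'' L L' L'' t w
     \<le> real (card (tube_alive E B f L t w)) * exp (Eerr f' f'' L L' L'' t - growth r f' L L' t)"
proof (cases "finite (alive E t w)")
  case False
  then show ?thesis by (simp add: Zmart_def)
next
  case fin: True
  let ?K = "exp (Eerr f' f'' L L' L'' t - growth r f' L L' t)"
  let ?P = "\<lambda>u. \<forall>s\<in>{0..t}. \<bar>pos E B u s w - f s\<bar> < L s"
  have "Zmart r E B f f' f'' L L' L'' t w \<le> (\<Sum>u\<in>alive E t w. if ?P u then ?K else 0)"
    unfolding Zmart_def
  proof (rule sum_mono)
    fix u assume "u \<in> alive E t w"
    show "exp (- r * t) * zeta E B f f' f'' L L' L'' u t w \<le> (if ?P u then ?K else 0)"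
    proof (cases "?P u")
      case True
      let ?lg = "logG E B f f' f'' L L' L'' u t w"
      have lg: "?lg \<le> r * t - growth r f' L L' t + Eerr f' f'' L L' L'' t"
        unfolding logG_def Let_def
        by (rule logG_bound[OF t f0 f_deriv f'_deriv f''_cont L_pos L_deriv L'_deriv L''_cont Xc True])
      have "exp (- r * t) * zeta E B f f' f'' L L' L'' u t w
          = exp (- r * t) * exp ?lg * cos (pi / (2 * L t) * (pos E B u t w - f t))"
        using True by (simp add: zeta_def)
      also have "\<dots> \<le> exp (- r * t) * exp ?lg"
        by (rule mult_left_le) auto
      also have "\<dots> = exp (?lg - r * t)" by (simp add: exp_diff exp_minus field_simps)
      also have "\<dots> \<le> ?K" using lg by simp
      finally show ?thesis using True by simp
    next
      case False
      then have "zeta E B f f' f'' L L' L'' u t w = 0" unfolding zeta_def by auto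
      then show ?thesis using False by simp
    qed
  qed
  also have "\<dots> = (\<Sum>u\<in>tube_alive E B f L t w. ?K)"
    unfolding tube_alive_def by (rule sum.inter_filter[OF fin, symmetric])
  also have "\<dots> = real (card (tube_alive E B f L t w)) * ?K" by simp
  finally show ?thesis .
qed


lemma liminf_part:
  fixes Z N g Ee :: "real \<Rightarrow> real"
  assumes bound: "\<And>t. t \<ge> 0 \<Longrightarrow> Z t \<le> N t * exp (Ee t - g t)"
    and E_small: "((\<lambda>t. Ee t / t) \<longlongrightarrow> 0) at_top"
    and S_pos: "Liminf at_top (\<lambda>t. ereal (g t / t)) > 0"
    and Z_pos: "Liminf at_top (\<lambda>t. ereal (Z t)) > 0"
  shows "Liminf at_top (\<lambda>t. ereal (ln (N t) / g t)) \<ge> 1"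
proof -
  obtain c where c: "0 < ereal c" "ereal c < Liminf at_top (\<lambda>t. ereal (Z t))"
    using ereal_dense2[OF Z_pos] by blast
  have c0: "c > 0" using c by simp
  have evZ: "eventually (\<lambda>t. c < Z t) at_top"
    using less_LiminfD[OF c(2)] by simp
  obtain e where e: "0 < ereal e" "ereal e < Liminf at_top (\<lambda>t. ereal (g t / t))"
    using ereal_dense2[OF S_pos] by blast
  have e0: "e > 0" using e by simp
  have evg: "eventually (\<lambda>t. e < g t / t) at_top"
    using less_LiminfD[OF e(2)] by simp
  define h where "h t = (ln c - Ee t) / g t" for t
  define K where "K = \<bar>ln c\<bar> / e"
  have ev: "eventually (\<lambda>t. t \<ge> 1 \<and> c < Z t \<and> e < g t / t) at_top"
    using evZ evg eventually_ge_at_top[of 1] by eventually_elim auto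
  have ev1: "eventually (\<lambda>t. 1 + h t \<le> ln (N t) / g t) at_top"
    using ev
  proof eventually_elim
    case (elim t)
    then have t1: "t \<ge> 1" and cZ: "c < Z t" and eg: "e < g t / t" by auto
    have "g t / t > 0" using eg e0 by linarith
    then have gpos: "g t > 0" using t1 by (simp add: zero_less_divide_iff)
    have cN: "c < N t * exp (Ee t - g t)" using cZ bound[of t] t1 by auto
    have Npos: "N t > 0"
    proof (rule ccontr)
      assume "\<not> N t > 0"
      then have "N t * exp (Ee t - g t) \<le> 0" by (simp add: mult_nonpos_nonneg)
      then show False using cN c0 by linarith
    qed
    have "ln c < ln (N t * exp (Ee t - g t))" using cN c0 by simp
    also have "\<dots> = ln (N t) + Ee t - g t" using Npos by (simp add: ln_mult)
    finally have "g t + (ln c - Ee t) \<le> ln (N t)" by simp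
    then have "(g t + (ln c - Ee t)) / g t \<le> ln (N t) / g t"
      using gpos by (simp add: divide_right_mono)
    also have "(g t + (ln c - Ee t)) / g t = 1 + h t" using gpos by (simp add: h_def add_divide_distrib)
    finally show ?case .
  qed
  have lim0: "((\<lambda>t. K * inverse t + (1/e) * \<bar>Ee t / t\<bar>) \<longlongrightarrow> K * 0 + (1/e) * \<bar>0\<bar>) at_top"
    by (intro tendsto_intros E_small tendsto_inverse_0_at_top filterlim_ident)
  have lim0': "((\<lambda>t. K * inverse t + (1/e) * \<bar>Ee t / t\<bar>) \<longlongrightarrow> 0) at_top"
    using lim0 by simp
  have hlim: "(h \<longlongrightarrow> 0) at_top"
  proof (rule Lim_null_comparison[OF _ lim0'])
    show "eventually (\<lambda>t. norm (h t) \<le> K * inverse t + (1/e) * \<bar>Ee t / t\<bar>) at_top"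
      using ev
    proof eventually_elim
      case (elim t)
      then have t1: "t \<ge> 1" and eg: "e < g t / t" by auto
      have tp: "t > 0" using t1 by simp
      have ge: "e * t < g t" using eg tp by (simp add: field_simps)
      have "e * t > 0" using e0 tp by simp
      then have gpos: "g t > 0" using ge by linarith
      have "norm (h t) = \<bar>ln c - Ee t\<bar> / g t" using gpos by (simp add: h_def)
      also have "\<dots> \<le> (\<bar>ln c\<bar> + \<bar>Ee t\<bar>) / g t"
        using gpos by (intro divide_right_mono) auto
      also have "\<dots> \<le> (\<bar>ln c\<bar> + \<bar>Ee t\<bar>) / (e * t)"
        using gpos ge e0 tp by (intro divide_left_mono) auto
      also have "\<dots> = K * inverse t + (1/e) * \<bar>Ee t / t\<bar>"
        using e0 tp by (simp add: K_def field_simps)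
      finally show ?case .
    qed
  qed
  have "Liminf at_top (\<lambda>t. ereal (1 + h t)) = ereal (1 + 0)"
  proof (rule lim_imp_Liminf)
    have "((\<lambda>t. 1 + h t) \<longlongrightarrow> 1 + 0) at_top" by (intro tendsto_add tendsto_const hlim)
    then show "((\<lambda>t. ereal (1 + h t)) \<longlongrightarrow> ereal (1 + 0)) at_top" by (simp only: lim_ereal)
  qed simp
  then have "1 = Liminf at_top (\<lambda>t. ereal (1 + h t))" by simp
  also have "\<dots> \<le> Liminf at_top (\<lambda>t. ereal (ln (N t) / g t))"
    by (rule Liminf_mono) (use ev1 in simp)
  finally show ?thesis .
qed

theorem proposition2:
  fixes M :: "'w measure" and r :: real
    and E :: "bool list \<Rightarrow> 'w \<Rightarrow> real"
    and B :: "bool list \<Rightarrow> real \<Rightarrow> 'w \<Rightarrow> real"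
    and f f' f'' L L' L'' :: "real \<Rightarrow> real"
  assumes M: "prob_space M"
    and r: "r > 0"
    and E_exp: "\<And>u. distributed M lborel (E u) (\<lambda>x. ennreal (exponential_density r x))"
    and B_BM: "\<And>u. std_BM M (B u)"
    and indep: "prob_space.indep_sets M
       (\<lambda>(u, b). if b then gen_sigma M (\<lambda>_. E u) else gen_sigma M (B u)) UNIV"
    and f0: "f 0 = 0"
    and f_deriv: "\<And>s. s \<ge> 0 \<Longrightarrow> (f has_real_derivative f' s) (at s within {0..})"
    and f'_deriv: "\<And>s. s \<ge> 0 \<Longrightarrow> (f' has_real_derivative f'' s) (at s within {0..})"
    and f''_cont: "continuous_on {0..} f''"
    and L_pos: "\<And>s. s \<ge> 0 \<Longrightarrow> L s > 0"
    and L_deriv: "\<And>s. s \<ge> 0 \<Longrightarrow> (L has_real_derivative L' s) (at s within {0..})"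
    and L'_deriv: "\<And>s. s \<ge> 0 \<Longrightarrow> (L' has_real_derivative L'' s) (at s within {0..})"
    and L''_cont: "continuous_on {0..} L''"
    and E_small: "((\<lambda>t. Eerr f' f'' L L' L'' t / t) \<longlongrightarrow> 0) at_top"
    and S_fin: "Sconst r f' L L' < \<infinity>"
    and S_pos: "Sconst r f' L L' > 0"
  shows "AE \<omega> in M.
     Liminf at_top (\<lambda>t. ereal (Zmart r E B f f' f'' L L' L'' t \<omega>)) > 0 \<longrightarrow>
     Liminf at_top (\<lambda>t. ereal (ln (real (card (tube_alive E B f L t \<omega>)))
                                  / growth r f' L L' t)) \<ge> 1"
proof -
  have AE1: "AE w in M. \<forall>u. E u w \<ge> 0"
    using E_nonneg_AE[OF E_exp] by (simp add: AE_all_countable)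
  show ?thesis using AE1 AE_space
  proof eventually_elim
    case (elim w)
    then have Epos: "\<And>u. E u w \<ge> 0" and wM: "w \<in> space M" by auto
    have Bc: "\<And>v. continuous_on {0..} (\<lambda>s. B v s w)"
      using B_BM wM unfolding std_BM_def by blast
    show ?case
    proof
      assume Zp: "Liminf at_top (\<lambda>t. ereal (Zmart r E B f f' f'' L L' L'' t w)) > 0"
      show "Liminf at_top (\<lambda>t. ereal (ln (real (card (tube_alive E B f L t w))) / growth r f' L L' t)) \<ge> 1"
      proof (rule liminf_part[OF _ E_small _ Zp])
        fix t :: real assume t: "t \<ge> 0"
        show "Zmart r E B f f' f'' L L' L'' t w
          \<le> real (card (tube_alive E B f L t w)) * exp (Eerr f' f'' L L' L'' t - growth r f' L L' t)"
          by (rule Z_bound[OF t f0 f_deriv f'_deriv f''_cont L_pos L_deriv L'_deriv L''_cont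
                pos_cont[where B=B and E=E and w=w, OF Bc Epos]])
      next
        show "Liminf at_top (\<lambda>t. ereal (growth r f' L L' t / t)) > 0"
          using S_pos unfolding Sconst_def .
      qed
    qed
  qed
qed

end
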